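(* Let $\mathbf n=(n_1,\dots,n_k)$ with $n_i\ge0$ integers and $\sum n_i=n$. For every $m\ge0$, as rational functions of $q^{-2}$ and indeterminates $\mu_1,\dots,\mu_k$, $$\vartheta_m(\mathbf n,q^{-2},\mu)=\sum_{j=1}^kC_j(\mathbf n,q^{-2},\mu)\mu_j^m,$$ where $$C_j(\mathbf n,q^{-2},\mu)=\hat n_j+\hat n_j\sum_{\ell=1}^{k-1}(1-q^{-2})^\ell\sum_{\substack{1\le i_1<\dots<i_\ell\le k\\ i_1,\dots,i_\ell\neq j}}\frac{\hat n_{i_1}\mu_{i_1}}{\mu_j-\mu_{i_1}}\cdots\frac{\hat n_{i_\ell}\mu_{i_\ell}}{\mu_j-\mu_{i_\ell}}.$$
   Context: $\hat m=\frac{1-q^{-2m}}{1-q^{-2}}$ for $m\in\mathbb Z$. For $m\ge1$, $\vartheta_m(\mathbf n,q^{-2},\mu)=\sum_{\ell=1}^k(1-q^{-2})^{\ell-1}\sum_{\mathbf d}\sum_{1\le i_1<\dots<i_\ell\le k}\hat n_{i_1}\cdots\hat n_{i_\ell}\mu_{i_1}^{d_1}\cdots\mu_{i_\ell}^{d_\ell}$, where $\mathbf d=(d_1,\dots,d_\ell)$ runs over $\ell$-tuples of positive integers with $d_1+\dots+d_\ell=m$; and $\vartheta_0(\mathbf n,q^{-2},\mu)=\hat n$. *)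

theory Defs
  imports Main
begin

text \<open>Here t stands for q^(-2); hat t m = (1 - t^m)/(1 - t).\<close>
definition qhat :: "'a::field \<Rightarrow> nat \<Rightarrow> 'a" where
  "qhat t m = (1 - t ^ m) / (1 - t)"

text \<open>theta_m(n, t, mu), with n = (n 1, ..., n k). Tuples d = (d_1,...,d_l) of positive
  integers summing to m are lists; indices i_1 < ... < i_l in {1..k} are strictly
  sorted lists.\<close>
definition theta :: "nat \<Rightarrow> (nat \<Rightarrow> nat) \<Rightarrow> 'a::field \<Rightarrow> (nat \<Rightarrow> 'a) \<Rightarrow> nat \<Rightarrow> 'a" where
  "theta k n t \<mu> m =
    (if m = 0 then qhat t (\<Sum>i=1..k. n i)
     else (\<Sum>l=1..k. (1 - t) ^ (l - 1) *
       (\<Sum>d\<in>{d. length d = l \<and> (\<forall>x\<in>set d. 0 < x) \<and> sum_list d = m}.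
         (\<Sum>is\<in>{is. length is = l \<and> sorted_wrt (<) is \<and> set is \<subseteq> {1..k}}.
            (\<Prod>r<l. qhat t (n (is ! r)) * \<mu> (is ! r) ^ (d ! r))))))"

definition Ccoef :: "nat \<Rightarrow> (nat \<Rightarrow> nat) \<Rightarrow> 'a::field \<Rightarrow> (nat \<Rightarrow> 'a) \<Rightarrow> nat \<Rightarrow> 'a" where
  "Ccoef k n t \<mu> j =
    qhat t (n j) + qhat t (n j) *
      (\<Sum>l=1..k-1. (1 - t) ^ l *
        (\<Sum>S\<in>{S. S \<subseteq> {1..k} - {j} \<and> card S = l}.
           (\<Prod>i\<in>S. qhat t (n i) * \<mu> i / (\<mu> j - \<mu> i))))"

end

theory Submission
  imports Defs
begin


lemma k0: fixes v w B C :: "'a::field"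
  assumes "v \<noteq> 0" "w \<noteq> 0" "v + w \<noteq> 0"
  shows "B/(v+w) * (1 - C/v) + C/w * (B/v) = (1 + C/w) * (B/(v+w))"
proof -
  have e1: "B/(v+w) * (1 - C/v) = B*(v - C)/((v+w)*v)" using assms by (simp add: field_simps)
  have "(C*B*(v+w))/((v+w)*v*w) = ((v+w)*(C*B))/((v+w)*(v*w))" by (simp add: ac_simps)
  also have "\<dots> = C*B/(v*w)" using assms(3) by (rule nonzero_mult_divide_mult_cancel_left)
  also have "\<dots> = C/w * (B/v)" by (simp add: ac_simps)
  finally have e2: "C/w * (B/v) = (C*B*(v+w))/((v+w)*v*w)" by simp
  have "(1 + C/w) = (w+C)/w" using assms by (simp add: field_simps)
  then have "(1 + C/w) * (B/(v+w)) = (w+C)*B/(w*(v+w))" by simp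
  also have "\<dots> = (v*((w+C)*B))/(v*(w*(v+w)))" using assms(1) by simp
  finally have e3: "(1 + C/w) * (B/(v+w)) = (w+C)*B*v/((v+w)*v*w)" by (simp add: ac_simps)
  have e4: "B*(v - C)/((v+w)*v) = B*(v - C)*w/((v+w)*v*w)" using assms by simp
  have "B*(v - C)*w + C*B*(v+w) = (w+C)*B*v" by (simp add: algebra_simps)
  then show ?thesis unfolding e1 e2 e3 e4 add_divide_distrib[symmetric] by simp
qed
lemma k1: fixes X Y Z B C :: "'a::field"
  assumes "X \<noteq> Y" "Z \<noteq> Y" "X \<noteq> Z"
  shows "B/(X-Y) * (1 + C/(Y-Z)) + C/(X-Z) * (B/(Z-Y)) = (1 + C/(X-Z)) * (B/(X-Y))"
proof -
  have a: "(Z - Y) \<noteq> 0" "X - Z \<noteq> 0" "(Z-Y) + (X-Z) \<noteq> 0" using assms by auto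
  have b: "C/(Y-Z) = - (C/(Z-Y))" by (metis minus_diff_eq divide_minus_right)
  have c: "X - Y = (Z-Y) + (X-Z)" by simp
  show ?thesis unfolding b c using k0[OF a, of B C] by simp
qed
lemma k2: fixes Y Z Cj Cz :: "'a::field"
  assumes "Z \<noteq> Y"
  shows "Cj * (1 + Cz * Z / (Y - Z)) + Cz * (Cj * Y / (Z - Y)) = (1 - Cz) * Cj"
proof -
  have a: "Z - Y \<noteq> 0" using assms by auto
  have b: "Cz * Z/(Y-Z) = - (Cz * (Z/(Z-Y)))" by (metis minus_diff_eq divide_minus_right times_divide_eq_right)
  have c: "Cj * Y / (Z - Y) = Cj * (Y/(Z-Y))" by simp
  have d: "Z/(Z-Y) = 1 + Y/(Z-Y)" using a by (simp add: field_simps)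
  show ?thesis unfolding b c d by (simp add: algebra_simps)
qed

lemma abs_lem: fixes A1 A2 A3 A4 P :: "'a::field"
  assumes h: "A1*(1+A2) + A3*A4 = (1+A3)*A1"
  shows "A1*(1+A2)*P + A3*(A4*P) = (1+A3)*(A1*P)"
proof -
  have "A1*(1+A2)*P + A3*(A4*P) = (A1*(1+A2) + A3*A4)*P" by (simp add: algebra_simps)
  also have "\<dots> = (1+A3)*(A1*P)" unfolding h by (simp add: ac_simps)
  finally show ?thesis .
qed

lemma pf_lemma:
  fixes \<mu> b :: "nat \<Rightarrow> 'a::field"
  assumes "finite A" "inj_on \<mu> A"
  shows "x \<notin> \<mu> ` A \<Longrightarrow> (\<Prod>i\<in>A. 1 + b i / (x - \<mu> i)) =
     1 + (\<Sum>j\<in>A. b j / (x - \<mu> j) * (\<Prod>i\<in>A-{j}. 1 + b i / (\<mu> j - \<mu> i)))"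
  using assms
proof (induction A arbitrary: x rule: finite_induct)
  case empty
  then show ?case by simp
next
  case (insert z A)
  define P where "P j = (\<Prod>i\<in>A-{j}. 1 + b i / (\<mu> j - \<mu> i))" for j
  have inj: "inj_on \<mu> A" using insert by auto
  have zA: "\<mu> z \<notin> \<mu> ` A" using insert by auto
  have xz: "x \<noteq> \<mu> z" using insert by auto
  have IH1: "(\<Prod>i\<in>A. 1 + b i / (x - \<mu> i)) = 1 + (\<Sum>j\<in>A. b j / (x - \<mu> j) * P j)"
    using insert inj unfolding P_def by auto
  have IH2: "(\<Prod>i\<in>A. 1 + b i / (\<mu> z - \<mu> i)) = 1 + (\<Sum>j\<in>A. b j / (\<mu> z - \<mu> j) * P j)"
    using insert(3)[OF zA inj] unfolding P_def by auto
  have Pins: "(\<Prod>i\<in>insert z A-{j}. 1 + b i / (\<mu> j - \<mu> i)) = (1 + b z / (\<mu> j - \<mu> z)) * P j"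
    if "j \<in> A" for j
  proof -
    have "insert z A - {j} = insert z (A - {j})" using that insert by auto
    then show ?thesis unfolding P_def using insert by simp
  qed
  have Pz: "insert z A - {z} = A" using insert by auto
  have key: "b j / (x - \<mu> j) * (1 + b z / (\<mu> j - \<mu> z)) * P j + b z / (x - \<mu> z) * (b j / (\<mu> z - \<mu> j) * P j)
      = (1 + b z / (x - \<mu> z)) * (b j / (x - \<mu> j) * P j)" if "j \<in> A" for j
  proof -
    have "x \<noteq> \<mu> j" "\<mu> z \<noteq> \<mu> j" using that insert zA by auto
    then have "b j/(x-\<mu> j) * (1 + b z/(\<mu> j-\<mu> z)) + b z/(x-\<mu> z) * (b j/(\<mu> z-\<mu> j)) = (1 + b z/(x-\<mu> z)) * (b j/(x-\<mu> j))"
      using xz by (intro k1) auto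
    then show ?thesis by (rule abs_lem)
  qed
  have "(\<Prod>i\<in>insert z A. 1 + b i / (x - \<mu> i)) = (1 + b z / (x - \<mu> z)) * (1 + (\<Sum>j\<in>A. b j / (x - \<mu> j) * P j))"
    using insert IH1 by simp
  also have "\<dots> = 1 + b z / (x - \<mu> z) + (\<Sum>j\<in>A. (1 + b z / (x - \<mu> z)) * (b j / (x - \<mu> j) * P j))"
    by (simp add: algebra_simps sum_distrib_left)
  also have "\<dots> = 1 + b z / (x - \<mu> z) + (\<Sum>j\<in>A. b j / (x - \<mu> j) * (1 + b z / (\<mu> j - \<mu> z)) * P j
        + b z / (x - \<mu> z) * (b j / (\<mu> z - \<mu> j) * P j))"
    using key by simp
  also have "\<dots> = 1 + b z / (x - \<mu> z) * (\<Prod>i\<in>A. 1 + b i / (\<mu> z - \<mu> i))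
        + (\<Sum>j\<in>A. b j / (x - \<mu> j) * ((1 + b z / (\<mu> j - \<mu> z)) * P j))"
    unfolding IH2 by (simp add: sum.distrib sum_distrib_left algebra_simps)
  also have "\<dots> = 1 + (\<Sum>j\<in>insert z A. b j / (x - \<mu> j) * (\<Prod>i\<in>insert z A-{j}. 1 + b i / (\<mu> j - \<mu> i)))"
    using insert Pins Pz by simp
  finally show ?case .
qed

lemma sumR_lemma:
  fixes \<mu> c :: "nat \<Rightarrow> 'a::field"
  assumes "finite A" "inj_on \<mu> A"
  shows "(\<Sum>j\<in>A. c j * (\<Prod>i\<in>A-{j}. 1 + c i * \<mu> i / (\<mu> j - \<mu> i))) = 1 - (\<Prod>i\<in>A. 1 - c i)"
  using assms
proof (induction A rule: finite_induct)
  case empty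
  then show ?case by simp
next
  case (insert z A)
  define P where "P j = (\<Prod>i\<in>A-{j}. 1 + c i * \<mu> i / (\<mu> j - \<mu> i))" for j
  have inj: "inj_on \<mu> A" using insert by auto
  have zA: "\<mu> z \<notin> \<mu> ` A" using insert by auto
  have IH: "(\<Sum>j\<in>A. c j * P j) = 1 - (\<Prod>i\<in>A. 1 - c i)" using insert inj unfolding P_def by auto
  have PF: "(\<Prod>i\<in>A. 1 + c i * \<mu> i / (\<mu> z - \<mu> i)) = 1 + (\<Sum>j\<in>A. c j * \<mu> j / (\<mu> z - \<mu> j) * P j)"
    using pf_lemma[OF insert(1) inj zA, of "\<lambda>i. c i * \<mu> i"] unfolding P_def by simp
  have Pins: "(\<Prod>i\<in>insert z A-{j}. 1 + c i * \<mu> i / (\<mu> j - \<mu> i)) = (1 + c z * \<mu> z / (\<mu> j - \<mu> z)) * P j"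
    if "j \<in> A" for j
  proof -
    have "insert z A - {j} = insert z (A - {j})" using that insert by auto
    then show ?thesis unfolding P_def using insert by simp
  qed
  have Pz: "insert z A - {z} = A" using insert by auto
  have key: "c j * ((1 + c z * \<mu> z / (\<mu> j - \<mu> z)) * P j) + c z * (c j * \<mu> j / (\<mu> z - \<mu> j) * P j)
      = (1 - c z) * (c j * P j)" if "j \<in> A" for j
  proof -
    have "\<mu> z \<noteq> \<mu> j" using that zA by auto
    then have "c j * (1 + c z * \<mu> z / (\<mu> j - \<mu> z)) + c z * (c j * \<mu> j / (\<mu> z - \<mu> j)) = (1 - c z) * c j"
      by (rule k2)
    then have "(c j * (1 + c z * \<mu> z / (\<mu> j - \<mu> z)) + c z * (c j * \<mu> j / (\<mu> z - \<mu> j))) * P j = (1 - c z) * c j * P j"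
      by simp
    then show ?thesis by (simp add: algebra_simps)
  qed
  have "(\<Sum>j\<in>insert z A. c j * (\<Prod>i\<in>insert z A-{j}. 1 + c i * \<mu> i / (\<mu> j - \<mu> i)))
     = c z * (\<Prod>i\<in>A. 1 + c i * \<mu> i / (\<mu> z - \<mu> i)) + (\<Sum>j\<in>A. c j * ((1 + c z * \<mu> z / (\<mu> j - \<mu> z)) * P j))"
    using insert Pins Pz by simp
  also have "\<dots> = c z + (\<Sum>j\<in>A. c j * ((1 + c z * \<mu> z / (\<mu> j - \<mu> z)) * P j) + c z * (c j * \<mu> j / (\<mu> z - \<mu> j) * P j))"
    unfolding PF by (simp add: sum.distrib sum_distrib_left algebra_simps)
  also have "\<dots> = c z + (1 - c z) * (\<Sum>j\<in>A. c j * P j)"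
    using key by (simp add: sum_distrib_left)
  also have "\<dots> = 1 - (\<Prod>i\<in>insert z A. 1 - c i)"
    unfolding IH using insert by (simp add: algebra_simps)
  finally show ?case .
qed

lemma geom_lemma:
  fixes x y :: "'a::field"
  shows "(x - y) * (\<Sum>e=1..p. x ^ e * y ^ (Suc p - e)) = x * y * (x ^ p - y ^ p)"
proof (induction p)
  case 0
  then show ?case by simp
next
  case (Suc p)
  have "(\<Sum>e=1..Suc p. x ^ e * y ^ (Suc (Suc p) - e)) = y * (\<Sum>e=1..p. x ^ e * y ^ (Suc p - e)) + x ^ Suc p * y"
  proof -
    have "(\<Sum>e=1..p. x ^ e * y ^ (Suc (Suc p) - e)) = (\<Sum>e=1..p. y * (x ^ e * y ^ (Suc p - e)))"
      by (rule sum.cong) (auto simp: Suc_diff_le)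
    then show ?thesis by (simp add: sum_distrib_left)
  qed
  moreover have "(x - y) * (y * (\<Sum>e=1..p. x ^ e * y ^ (Suc p - e)) + x ^ Suc p * y)
     = y * ((x - y) * (\<Sum>e=1..p. x ^ e * y ^ (Suc p - e))) + (x - y) * x ^ Suc p * y"
    by (simp add: algebra_simps)
  ultimately show ?case unfolding Suc by (simp add: algebra_simps)
qed




definition comp :: "nat \<Rightarrow> nat \<Rightarrow> nat list set" where
  "comp l m = {d. length d = l \<and> (\<forall>x\<in>set d. 0 < x) \<and> sum_list d = m}"
definition sl :: "nat \<Rightarrow> nat set \<Rightarrow> nat list set" where
  "sl l A = {is. length is = l \<and> sorted_wrt (<) is \<and> set is \<subseteq> A}"
definition TT :: "(nat \<Rightarrow> nat \<Rightarrow> 'a::field) \<Rightarrow> nat set \<Rightarrow> nat \<Rightarrow> nat \<Rightarrow> 'a" where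
  "TT g A l m = (\<Sum>is\<in>sl l A. \<Sum>d\<in>comp l m. \<Prod>r<l. g (is!r) (d!r))"

lemma finite_comp: "finite (comp l m)"
proof -
  have "comp l m \<subseteq> {xs. set xs \<subseteq> {..m} \<and> length xs = l}"
    unfolding comp_def using member_le_sum_list by fastforce
  then show ?thesis using finite_lists_length_eq[of "{..m}" l] finite_subset by blast
qed

lemma finite_sl: "finite A \<Longrightarrow> finite (sl l A)"
proof -
  assume "finite A"
  have "sl l A \<subseteq> {xs. set xs \<subseteq> A \<and> length xs = l}" unfolding sl_def by auto
  then show ?thesis using finite_lists_length_eq[OF \<open>finite A\<close>, of l] finite_subset by blast
qed

lemma comp_0: "comp 0 m = (if m = 0 then {[]} else {})"
  unfolding comp_def by auto

lemma sl_0: "sl 0 A = {[]}"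
  unfolding sl_def by auto

lemma comp_Suc: "comp (Suc l) m = (\<lambda>(e,d). e#d) ` (SIGMA e:{1..m}. comp l (m-e))"
proof (rule set_eqI, rule iffI)
  fix xs assume "xs \<in> comp (Suc l) m"
  then obtain e d where xs: "xs = e#d" and "length d = l" "0 < e" "\<forall>x\<in>set d. 0 < x" "e + sum_list d = m"
    unfolding comp_def by (cases xs) auto
  then show "xs \<in> (\<lambda>(e,d). e#d) ` (SIGMA e:{1..m}. comp l (m-e))"
    unfolding comp_def by (auto intro!: image_eqI[of _ _ "(e,d)"])
next
  fix xs assume "xs \<in> (\<lambda>(e,d). e#d) ` (SIGMA e:{1..m}. comp l (m-e))"
  then show "xs \<in> comp (Suc l) m" unfolding comp_def by auto
qed

lemma sl_Suc:
  assumes "a \<le> k"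
  shows "sl (Suc l) {a..k} = sl (Suc l) {Suc a..k} \<union> (Cons a) ` sl l {Suc a..k}"
proof (rule set_eqI, rule iffI)
  fix xs assume xs: "xs \<in> sl (Suc l) {a..k}"
  then obtain y ys where xs': "xs = y#ys" unfolding sl_def by (cases xs) auto
  show "xs \<in> sl (Suc l) {Suc a..k} \<union> (Cons a) ` sl l {Suc a..k}"
  proof (cases "y = a")
    case True
    then have "ys \<in> sl l {Suc a..k}" using xs xs' unfolding sl_def by fastforce
    then show ?thesis using xs' True by auto
  next
    case False
    then have "y > a" using xs xs' unfolding sl_def by auto
    then have "xs \<in> sl (Suc l) {Suc a..k}" using xs xs' unfolding sl_def by fastforce
    then show ?thesis by auto
  qed
next
  fix xs assume "xs \<in> sl (Suc l) {Suc a..k} \<union> (Cons a) ` sl l {Suc a..k}"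
  then consider "xs \<in> sl (Suc l) {Suc a..k}" | ys where "xs = a#ys" "ys \<in> sl l {Suc a..k}" by auto
  then show "xs \<in> sl (Suc l) {a..k}"
  proof cases
    case 1
    then show ?thesis unfolding sl_def by auto
  next
    case 2
    have "\<forall>y\<in>set ys. a < y" using 2(2) unfolding sl_def by auto
    then show ?thesis using 2 assms unfolding sl_def by auto
  qed
qed

lemma sl_big:
  assumes "finite A" "card A < l"
  shows "sl l A = {}"
proof (rule ccontr)
  assume "sl l A \<noteq> {}"
  then obtain xs where "length xs = l" "sorted_wrt (<) xs" "set xs \<subseteq> A" unfolding sl_def by auto
  then have "distinct xs" using strict_sorted_iff by blast
  then have "card (set xs) = l" using \<open>length xs = l\<close> distinct_card by blast
  then have "l \<le> card A" using card_mono[OF assms(1) \<open>set xs \<subseteq> A\<close>] by simp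
  then show False using assms by simp
qed

lemma TT_0: "TT g A 0 m = (if m = 0 then 1 else 0)"
  unfolding TT_def sl_0 comp_0 by simp

lemma TT_Suc_0: "TT g A (Suc l) 0 = 0"
  unfolding TT_def comp_Suc by simp

lemma TT_big: "finite A \<Longrightarrow> card A < l \<Longrightarrow> TT g A l m = 0"
  unfolding TT_def using sl_big by simp

lemma TT_Suc:
  assumes "a \<le> k"
  shows "TT g {a..k} (Suc l) m = TT g {Suc a..k} (Suc l) m + (\<Sum>e=1..m. g a e * TT g {Suc a..k} l (m-e))"
proof -
  define F where "F is = (\<Sum>d\<in>comp (Suc l) m. \<Prod>r<Suc l. g (is!r) (d!r))" for "is"
  have disj: "sl (Suc l) {Suc a..k} \<inter> (Cons a) ` sl l {Suc a..k} = {}"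
    unfolding sl_def by auto
  have fin1: "finite (sl (Suc l) {Suc a..k})" "finite ((Cons a) ` sl l {Suc a..k})"
    using finite_sl by auto
  have "TT g {a..k} (Suc l) m = sum F (sl (Suc l) {Suc a..k}) + sum F ((Cons a) ` sl l {Suc a..k})"
    unfolding TT_def F_def sl_Suc[OF assms] using sum.union_disjoint[OF fin1 disj] by simp
  also have "sum F ((Cons a) ` sl l {Suc a..k}) = (\<Sum>is\<in>sl l {Suc a..k}. F (a#is))"
    by (subst sum.reindex) (auto simp: inj_on_def)
  also have "\<dots> = (\<Sum>is\<in>sl l {Suc a..k}. \<Sum>e=1..m. g a e * (\<Sum>d\<in>comp l (m-e). \<Prod>r<l. g (is!r) (d!r)))"
  proof (rule sum.cong[OF refl])
    fix "is"
    have inj: "inj_on (\<lambda>(e,d). e#d) (SIGMA e:{1..m}. comp l (m-e))" by (auto simp: inj_on_def)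
    have "F (a#is) = (\<Sum>(e,d)\<in>(SIGMA e:{1..m}. comp l (m-e)). \<Prod>r<Suc l. g ((a#is)!r) ((e#d)!r))"
      unfolding F_def comp_Suc by (subst sum.reindex[OF inj]) (simp add: case_prod_unfold)
    also have "\<dots> = (\<Sum>e=1..m. \<Sum>d\<in>comp l (m-e). \<Prod>r<Suc l. g ((a#is)!r) ((e#d)!r))"
      by (rule sum.Sigma[symmetric]) (auto simp: finite_comp)
    also have "\<dots> = (\<Sum>e=1..m. g a e * (\<Sum>d\<in>comp l (m-e). \<Prod>r<l. g (is!r) (d!r)))"
      by (simp add: prod.lessThan_Suc_shift sum_distrib_left del: prod.lessThan_Suc)
    finally show "F (a#is) = \<dots>" .
  qed
  also have "\<dots> = (\<Sum>e=1..m. g a e * TT g {Suc a..k} l (m-e))"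
    unfolding TT_def by (subst sum.swap) (simp add: sum_distrib_left)
  finally show ?thesis unfolding TT_def F_def .
qed

definition QQ :: "(nat \<Rightarrow> nat \<Rightarrow> 'a::field) \<Rightarrow> 'a \<Rightarrow> nat \<Rightarrow> nat \<Rightarrow> nat \<Rightarrow> 'a" where
  "QQ g s k a m = (\<Sum>l\<le>k. s^l * TT g {a..k} l m)"

lemma QQ_0: "QQ g s k a 0 = 1"
proof -
  have "QQ g s k a 0 = (\<Sum>l\<le>k. if l = 0 then 1 else 0)"
    unfolding QQ_def by (rule sum.cong[OF refl]) (auto simp: TT_0 TT_Suc_0 gr0_conv_Suc)
  then show ?thesis by simp
qed

lemma QQ_top: "QQ g s k (Suc k) m = (if m = 0 then 1 else 0)"
proof -
  have "QQ g s k (Suc k) m = (\<Sum>l\<le>k. if l = 0 then (if m = 0 then 1 else 0) else 0)"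
    unfolding QQ_def by (rule sum.cong[OF refl]) (auto simp: TT_0 TT_big)
  then show ?thesis by simp
qed

lemma QQ_rec':
  assumes "1 \<le> a" "a \<le> Suc k'"
  shows "QQ g s (Suc k') a m = QQ g s (Suc k') (Suc a) m + s * (\<Sum>e=1..m. g a e * QQ g s (Suc k') (Suc a) (m-e))"
proof -
  define B where "B = {Suc a..Suc k'}"
  have vanish: "TT g B (Suc k') x = 0" for x
    unfolding B_def using assms by (intro TT_big) auto
  have Qs: "QQ g s (Suc k') (Suc a) x = (\<Sum>l\<le>k'. s^l * TT g B l x)" for x
    unfolding QQ_def B_def[symmetric] sum.atMost_Suc vanish by simp
  have "QQ g s (Suc k') a m = TT g {a..Suc k'} 0 m + (\<Sum>l\<le>k'. s^Suc l * TT g {a..Suc k'} (Suc l) m)"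
    unfolding QQ_def by (subst sum.atMost_Suc_shift) simp
  also have "\<dots> = TT g B 0 m + (\<Sum>l\<le>k'. s^Suc l * TT g B (Suc l) m)
      + (\<Sum>l\<le>k'. s^Suc l * (\<Sum>e=1..m. g a e * TT g B l (m-e)))"
    unfolding TT_Suc[OF assms(2)] B_def by (simp add: TT_0 algebra_simps sum.distrib)
  also have "TT g B 0 m + (\<Sum>l\<le>k'. s^Suc l * TT g B (Suc l) m) = QQ g s (Suc k') (Suc a) m"
    unfolding QQ_def B_def[symmetric] by (subst sum.atMost_Suc_shift) simp
  also have "(\<Sum>l\<le>k'. s^Suc l * (\<Sum>e=1..m. g a e * TT g B l (m-e)))
      = s * (\<Sum>e=1..m. g a e * QQ g s (Suc k') (Suc a) (m-e))"
    unfolding Qs by (simp add: sum_distrib_left algebra_simps) (rule sum.swap)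
  finally show ?thesis .
qed

lemma QQ_rec:
  assumes "1 \<le> a" "a \<le> k"
  shows "QQ g s k a m = QQ g s k (Suc a) m + s * (\<Sum>e=1..m. g a e * QQ g s k (Suc a) (m-e))"
  using assms QQ_rec'[of a] by (cases k) auto




lemma perj:
  fixes X Y G Rj cj Pj ca :: "'a::field"
  assumes "X \<noteq> Y" "(X - Y) * G = X * Y * (X ^ p - Y ^ p)" "Rj = cj * Pj"
  shows "Rj * Y ^ Suc p + ca * Rj * G
       = ca * X ^ Suc p * (cj * Y / (X - Y) * Pj) + cj * ((1 + ca * X / (Y - X)) * Pj) * Y ^ Suc p"
proof -
  have nz: "X - Y \<noteq> 0" using assms by simp
  have "G = X * Y * (X ^ p - Y ^ p) / (X - Y)" using assms(2) nz by (simp add: eq_divide_eq mult.commute)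
  then have G: "G = (X ^ Suc p * Y - X * Y ^ Suc p) * inverse (X - Y)"
    by (simp add: divide_inverse algebra_simps)
  have h: "ca * X / (Y - X) = - (ca * X * inverse (X - Y))"
    by (metis minus_diff_eq divide_minus_right divide_inverse)
  show ?thesis unfolding G h assms(3) by (simp add: divide_inverse algebra_simps)
qed

lemma QQ_closed:
  fixes g :: "nat \<Rightarrow> nat \<Rightarrow> 'a::field" and \<mu> c :: "nat \<Rightarrow> 'a"
  assumes gc: "\<And>i e. s * g i e = c i * \<mu> i ^ e" and inj: "inj_on \<mu> {1..k}"
  shows "1 \<le> a \<Longrightarrow> a \<le> Suc k \<Longrightarrow> 0 < m \<Longrightarrow>
    QQ g s k a m = (\<Sum>j\<in>{a..k}. c j * (\<Prod>i\<in>{a..k}-{j}. 1 + c i * \<mu> i / (\<mu> j - \<mu> i)) * \<mu> j ^ m)"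
proof (induction "Suc k - a" arbitrary: a m)
  case 0
  then have "a = Suc k" by simp
  then show ?case using QQ_top[of g s k m] 0 by simp
next
  case (Suc d)
  then have ak: "a \<le> k" by simp
  define B where "B = {Suc a..k}"
  define P where "P j = (\<Prod>i\<in>B-{j}. 1 + c i * \<mu> i / (\<mu> j - \<mu> i))" for j
  define R where "R j = c j * P j" for j
  define Z where "Z x = (\<Sum>j\<in>B. R j * \<mu> j ^ x)" for x
  obtain p where mp: "m = Suc p" using Suc.prems by (cases m) auto
  have IH: "QQ g s k (Suc a) x = Z x" if "0 < x" for x
    using Suc.hyps(1)[of "Suc a" x] Suc.hyps(2) Suc.prems ak that
    unfolding Z_def R_def P_def B_def by (simp add: mult.assoc)
  have aB: "a \<notin> B" and ins: "{a..k} = insert a B" and finB: "finite B"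
    using ak unfolding B_def by auto
  have injB: "inj_on \<mu> B" using inj Suc.prems unfolding B_def by (auto intro: inj_on_subset)
  have muB: "\<mu> a \<notin> \<mu> ` B" using inj Suc.prems ak unfolding B_def inj_on_def by force
  define G where "G j = (\<Sum>e=1..p. \<mu> a ^ e * \<mu> j ^ (Suc p - e))" for j
  have step1: "s * (\<Sum>e=1..m. g a e * QQ g s k (Suc a) (m-e)) = (\<Sum>j\<in>B. c a * R j * G j) + c a * \<mu> a ^ m"
  proof -
    have "s * (\<Sum>e=1..m. g a e * QQ g s k (Suc a) (m-e))
        = (\<Sum>e=1..p. s * g a e * QQ g s k (Suc a) (Suc p-e)) + s * g a (Suc p)"
      unfolding mp by (simp add: QQ_0 sum_distrib_left algebra_simps)
    also have "(\<Sum>e=1..p. s * g a e * QQ g s k (Suc a) (Suc p-e)) = (\<Sum>e=1..p. \<Sum>j\<in>B. c a * R j * (\<mu> a ^ e * \<mu> j ^ (Suc p - e)))"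
    proof (rule sum.cong[OF refl])
      fix e assume "e \<in> {1..p}"
      then have "QQ g s k (Suc a) (Suc p-e) = Z (Suc p - e)" by (intro IH) auto
      then show "s * g a e * QQ g s k (Suc a) (Suc p-e) = (\<Sum>j\<in>B. c a * R j * (\<mu> a ^ e * \<mu> j ^ (Suc p - e)))"
        unfolding gc Z_def by (simp add: sum_distrib_left algebra_simps)
    qed
    also have "\<dots> = (\<Sum>j\<in>B. c a * R j * G j)"
      unfolding G_def by (subst sum.swap) (simp add: sum_distrib_left)
    finally show ?thesis unfolding gc mp by simp
  qed
  have PF: "(\<Prod>i\<in>B. 1 + c i * \<mu> i / (\<mu> a - \<mu> i)) = 1 + (\<Sum>j\<in>B. c j * \<mu> j / (\<mu> a - \<mu> j) * P j)"
    using pf_lemma[OF finB injB muB, of "\<lambda>i. c i * \<mu> i"] unfolding P_def by simp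
  have rhs: "(\<Sum>j\<in>{a..k}. c j * (\<Prod>i\<in>{a..k}-{j}. 1 + c i * \<mu> i / (\<mu> j - \<mu> i)) * \<mu> j ^ m)
     = c a * (\<Prod>i\<in>B. 1 + c i * \<mu> i / (\<mu> a - \<mu> i)) * \<mu> a ^ m
       + (\<Sum>j\<in>B. c j * ((1 + c a * \<mu> a / (\<mu> j - \<mu> a)) * P j) * \<mu> j ^ m)"
  proof -
    have e1: "insert a B - {a} = B" using aB by auto
    have e2: "(\<Prod>i\<in>insert a B-{j}. 1 + c i * \<mu> i / (\<mu> j - \<mu> i)) = (1 + c a * \<mu> a / (\<mu> j - \<mu> a)) * P j"
      if "j \<in> B" for j
    proof -
      have "insert a B - {j} = insert a (B - {j})" using that aB by auto
      then show ?thesis unfolding P_def using finB aB by simp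
    qed
    show ?thesis unfolding ins using finB aB e1 e2 by simp
  qed
  have perj': "R j * \<mu> j ^ m + c a * R j * G j
      = c a * \<mu> a ^ m * (c j * \<mu> j / (\<mu> a - \<mu> j) * P j) + c j * ((1 + c a * \<mu> a / (\<mu> j - \<mu> a)) * P j) * \<mu> j ^ m"
    if "j \<in> B" for j
  proof -
    have "\<mu> a \<noteq> \<mu> j" using muB that by auto
    moreover have "(\<mu> a - \<mu> j) * G j = \<mu> a * \<mu> j * (\<mu> a ^ p - \<mu> j ^ p)"
      unfolding G_def by (rule geom_lemma)
    ultimately show ?thesis unfolding mp by (rule perj) (simp add: R_def)
  qed
  have "QQ g s k a m = Z m + ((\<Sum>j\<in>B. c a * R j * G j) + c a * \<mu> a ^ m)"
    using QQ_rec[OF Suc.prems(1) ak, of g s m] IH[of m] Suc.prems step1 by simp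
  also have "\<dots> = (\<Sum>j\<in>B. R j * \<mu> j ^ m + c a * R j * G j) + c a * \<mu> a ^ m"
    unfolding Z_def by (simp add: sum.distrib)
  also have "\<dots> = (\<Sum>j\<in>B. c a * \<mu> a ^ m * (c j * \<mu> j / (\<mu> a - \<mu> j) * P j)
        + c j * ((1 + c a * \<mu> a / (\<mu> j - \<mu> a)) * P j) * \<mu> j ^ m) + c a * \<mu> a ^ m"
    using perj' by simp
  also have "\<dots> = c a * (\<Prod>i\<in>B. 1 + c i * \<mu> i / (\<mu> a - \<mu> i)) * \<mu> a ^ m
       + (\<Sum>j\<in>B. c j * ((1 + c a * \<mu> a / (\<mu> j - \<mu> a)) * P j) * \<mu> j ^ m)"
    unfolding PF by (simp add: sum.distrib sum_distrib_left algebra_simps)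
  also have "\<dots> = (\<Sum>j\<in>{a..k}. c j * (\<Prod>i\<in>{a..k}-{j}. 1 + c i * \<mu> i / (\<mu> j - \<mu> i)) * \<mu> j ^ m)"
    using rhs by simp
  finally show ?case .
qed




lemma Ccoef_eq:
  fixes t :: "'a::field" and \<mu> :: "nat \<Rightarrow> 'a"
  assumes j: "j \<in> {1..k}"
  shows "((1 - t) * qhat t (n j)) * (\<Prod>i\<in>{1..k}-{j}. 1 + ((1 - t) * qhat t (n i)) * \<mu> i / (\<mu> j - \<mu> i))
       = (1 - t) * Ccoef k n t \<mu> j"
proof -
  define s where "s = 1 - t"
  define B where "B = {1..k} - {j}"
  define h where "h i = qhat t (n i) * \<mu> i / (\<mu> j - \<mu> i)" for i
  have finB: "finite B" unfolding B_def by simp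
  have cardB: "card B = k - 1" unfolding B_def using j by (simp add: card_Diff_singleton)
  have "(\<Prod>i\<in>B. 1 + (s * qhat t (n i)) * \<mu> i / (\<mu> j - \<mu> i)) = (\<Prod>i\<in>B. s * h i + 1)"
    unfolding h_def by (simp add: algebra_simps)
  also have "\<dots> = (\<Sum>X\<in>Pow B. \<Prod>i\<in>X. s * h i)"
    using prod_add[OF finB, of "\<lambda>i. s * h i" "\<lambda>i. 1"] by simp
  also have "\<dots> = (\<Sum>l\<in>{..card B}. \<Sum>X\<in>{X\<in>Pow B. card X = l}. \<Prod>i\<in>X. s * h i)"
    by (rule sum.group[symmetric]) (auto simp: finB card_mono)
  also have "\<dots> = (\<Sum>l\<in>{..k-1}. s ^ l * (\<Sum>X\<in>{S. S \<subseteq> B \<and> card S = l}. \<Prod>i\<in>X. h i))"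
    unfolding cardB
  proof (rule sum.cong[OF refl])
    fix l
    have "(\<Sum>X\<in>{X\<in>Pow B. card X = l}. \<Prod>i\<in>X. s * h i) = (\<Sum>X\<in>{S. S \<subseteq> B \<and> card S = l}. s ^ l * (\<Prod>i\<in>X. h i))"
      by (rule sum.cong) (auto simp: prod.distrib)
    then show "(\<Sum>X\<in>{X\<in>Pow B. card X = l}. \<Prod>i\<in>X. s * h i) = s ^ l * (\<Sum>X\<in>{S. S \<subseteq> B \<and> card S = l}. \<Prod>i\<in>X. h i)"
      by (simp add: sum_distrib_left)
  qed
  also have "\<dots> = 1 + (\<Sum>l=1..k-1. s ^ l * (\<Sum>X\<in>{S. S \<subseteq> B \<and> card S = l}. \<Prod>i\<in>X. h i))"
  proof -
    have z: "{S. S \<subseteq> B \<and> card S = 0} = {{}}" using finB by (auto simp: card_eq_0_iff dest: rev_finite_subset[OF finB])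
    show ?thesis unfolding atMost_atLeast0 by (subst sum.atLeast_Suc_atMost) (auto simp: z)
  qed
  finally have "(\<Prod>i\<in>B. 1 + (s * qhat t (n i)) * \<mu> i / (\<mu> j - \<mu> i)) = 1 + (\<Sum>l=1..k-1. s ^ l * (\<Sum>X\<in>{S. S \<subseteq> B \<and> card S = l}. \<Prod>i\<in>X. h i))" .
  then show ?thesis unfolding Ccoef_def s_def[symmetric] B_def[symmetric] h_def[symmetric]
    by (simp add: algebra_simps)
qed

theorem proposition4p3:
  fixes t :: "'a::field_char_0" and \<mu> :: "nat \<Rightarrow> 'a" and n :: "nat \<Rightarrow> nat" and k m :: nat
  assumes "t \<noteq> 1" and "inj_on \<mu> {1..k}"
  shows "theta k n t \<mu> m = (\<Sum>j=1..k. Ccoef k n t \<mu> j * \<mu> j ^ m)"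
proof -
  define s where "s = 1 - t"
  have s0: "s \<noteq> 0" using assms(1) unfolding s_def by simp
  define c where "c i = s * qhat t (n i)" for i
  define P where "P j = (\<Prod>i\<in>{1..k}-{j}. 1 + c i * \<mu> i / (\<mu> j - \<mu> i))" for j
  have CC: "c j * P j = s * Ccoef k n t \<mu> j" if "j \<in> {1..k}" for j
    using Ccoef_eq[OF that, of t n \<mu>] unfolding c_def P_def s_def by simp
  have "s * theta k n t \<mu> m = s * (\<Sum>j=1..k. Ccoef k n t \<mu> j * \<mu> j ^ m)"
  proof (cases "m = 0")
    case True
    have ci: "1 - c i = t ^ n i" for i
      unfolding c_def s_def qhat_def using assms(1) by simp
    have "s * (\<Sum>j=1..k. Ccoef k n t \<mu> j * \<mu> j ^ m) = (\<Sum>j=1..k. c j * P j)"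
      using CC True by (simp add: sum_distrib_left)
    also have "\<dots> = 1 - (\<Prod>i=1..k. 1 - c i)"
      unfolding P_def by (rule sumR_lemma) (use assms in auto)
    also have "\<dots> = 1 - t ^ (\<Sum>i=1..k. n i)" unfolding ci by (simp add: power_sum)
    also have "\<dots> = s * theta k n t \<mu> m"
      unfolding theta_def qhat_def s_def using True assms(1) by simp
    finally show ?thesis by (rule sym)
  next
    case False
    define g where "g i e = qhat t (n i) * \<mu> i ^ e" for i e
    have "theta k n t \<mu> m = (\<Sum>l=1..k. s ^ (l - 1) * TT g {1..k} l m)"
      unfolding theta_def TT_def comp_def[symmetric] sl_def[symmetric] g_def s_def using False
      by (simp add: sum.swap[of _ "sl _ _"])
    then have "s * theta k n t \<mu> m = (\<Sum>l=1..k. s ^ l * TT g {1..k} l m)"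
      by (simp add: sum_distrib_left mult.assoc[symmetric] power_Suc[symmetric] del: power_Suc)
    also have "\<dots> = QQ g s k 1 m"
      unfolding QQ_def atMost_atLeast0 using False by (subst (2) sum.atLeast_Suc_atMost) (auto simp: TT_0)
    also have "\<dots> = (\<Sum>j\<in>{1..k}. c j * P j * \<mu> j ^ m)"
      unfolding P_def using False assms(2) by (intro QQ_closed) (auto simp: g_def c_def)
    also have "\<dots> = s * (\<Sum>j=1..k. Ccoef k n t \<mu> j * \<mu> j ^ m)"
      using CC by (simp add: sum_distrib_left mult.assoc)
    finally show ?thesis .
  qed
  then show ?thesis using s0 by simp
qed


end
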